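(* Let $G$ be a graph with $n$ vertices and $m$ edges, and let $k$ be an integer. Then $G$ has an $\alpha$-labeling with critical number $k$ if and only if $n\leqslant m+1$, $G$ is bipartite, and there is a bipartition of $\widehat{G}$ and an arrangement of the vertices of $\widehat{G}$ such that the corresponding biadjacency matrix $A$ is graceful and $A$ has $k+1$ rows. Likewise, $G$ has a complete $\alpha$-labeling with critical number $k$ if and only if $n=m+1$, $G$ is bipartite, and there is a bipartition of $\widehat{G}$ and an arrangement of its vertices such that the corresponding biadjacency matrix $A$ is completely graceful and has $k+1$ rows.
   Context: Graphs are finite, simple and undirected. For a graph $G=(V,E)$ with $m$ edges, a $\beta$-labeling (graceful labeling) is an injective $f:V\to\{0,\ldots,m\}$ such that the edge labels $|f(u)-f(v)|$, $uv\in E$, are distinct. An $\alpha$-labeling with critical number $k\in\{0,\ldots,m\}$ is a $\beta$-labeling $f$ such that for every edge $uv$ either $f(u)\le k<f(v)$ or $f(v)\le k<f(u)$; it is complete if $f$ is bijective. If $G$ has $n\le m+1$ vertices, $\widehat{G}$ is $G$ with $m+1-n$ isolated vertices added. For a bipartite graph with parts $X,Y$ (with the vertices of each part ordered), the biadjacency matrix is the $|X|\times|Y|$ $0$-$1$ matrix whose $(x,y)$ entry is $1$ iff $xy$ is an edge. For a $p\times q$ matrix the box-value of position $(i,j)$ is $p+j-i$; for $c=1,\ldots,p+q-1$ the positions with box-value $c$ form a diagonal. A $0$-$1$ matrix is graceful if every diagonal contains at most one $1$, and completely graceful if every diagonal contains exactly one $1$. *)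

theory Defs
  imports Main "Jordan_Normal_Form.Matrix"
begin

definition simple_graph :: "'a set \<Rightarrow> 'a set set \<Rightarrow> bool" where
  "simple_graph V E \<longleftrightarrow> finite V \<and>
     (\<forall>e\<in>E. \<exists>u v. u \<in> V \<and> v \<in> V \<and> u \<noteq> v \<and> e = {u, v})"

definition beta_labeling :: "'a set \<Rightarrow> 'a set set \<Rightarrow> ('a \<Rightarrow> int) \<Rightarrow> bool" where
  "beta_labeling V E f \<longleftrightarrow> inj_on f V \<and> f ` V \<subseteq> {0..int (card E)} \<and>
     (\<forall>u v u' v'. {u, v} \<in> E \<longrightarrow> {u', v'} \<in> E \<longrightarrow>
        \<bar>f u - f v\<bar> = \<bar>f u' - f v'\<bar> \<longrightarrow> {u, v} = {u', v'})"

definition alpha_labeling :: "'a set \<Rightarrow> 'a set set \<Rightarrow> ('a \<Rightarrow> int) \<Rightarrow> int \<Rightarrow> bool" where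
  "alpha_labeling V E f k \<longleftrightarrow> beta_labeling V E f \<and> k \<in> {0..int (card E)} \<and>
     (\<forall>u v. {u, v} \<in> E \<longrightarrow> (f u \<le> k \<and> k < f v) \<or> (f v \<le> k \<and> k < f u))"

definition complete_alpha_labeling :: "'a set \<Rightarrow> 'a set set \<Rightarrow> ('a \<Rightarrow> int) \<Rightarrow> int \<Rightarrow> bool" where
  "complete_alpha_labeling V E f k \<longleftrightarrow> alpha_labeling V E f k \<and>
     bij_betw f V {0..int (card E)}"

definition is_bipartition :: "'a set \<Rightarrow> 'a set set \<Rightarrow> 'a set \<Rightarrow> 'a set \<Rightarrow> bool" where
  "is_bipartition V E X Y \<longleftrightarrow> X \<union> Y = V \<and> X \<inter> Y = {} \<and>
     (\<forall>e\<in>E. \<exists>x y. x \<in> X \<and> y \<in> Y \<and> e = {x, y})"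

definition bipartite :: "'a set \<Rightarrow> 'a set set \<Rightarrow> bool" where
  "bipartite V E \<longleftrightarrow> (\<exists>X Y. is_bipartition V E X Y)"

text \<open>G-hat: G with m+1-n fresh isolated vertices (the Inr vertices);
  the original vertices are embedded via Inl. Only used when n <= m+1.\<close>
definition hatV :: "'a set \<Rightarrow> 'a set set \<Rightarrow> ('a + nat) set" where
  "hatV V E = Inl ` V \<union> Inr ` {..< card E + 1 - card V}"

definition hatE :: "'a set set \<Rightarrow> ('a + nat) set set" where
  "hatE E = (\<lambda>e. Inl ` e) ` E"

text \<open>A bipartition of (V,E) together with an ordering of each part:
  xs lists the part X (rows), ys lists the part Y (columns).\<close>
definition ordered_bipartition :: "'b set \<Rightarrow> 'b set set \<Rightarrow> 'b list \<Rightarrow> 'b list \<Rightarrow> bool" where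
  "ordered_bipartition V E xs ys \<longleftrightarrow> distinct xs \<and> distinct ys \<and>
     is_bipartition V E (set xs) (set ys)"

definition biadj :: "'b set set \<Rightarrow> 'b list \<Rightarrow> 'b list \<Rightarrow> nat mat" where
  "biadj E xs ys = mat (length xs) (length ys)
     (\<lambda>(i, j). if {xs ! i, ys ! j} \<in> E then 1 else 0)"

text \<open>Box value of position (i,j) of a p x q matrix: p + j - i (1-based indices);
  with 0-based indices (i,j) this is p + (j+1) - (i+1) = p + j - i.\<close>
definition box_value :: "'c mat \<Rightarrow> nat \<times> nat \<Rightarrow> int" where
  "box_value A ij = int (dim_row A) + int (snd ij) - int (fst ij)"

definition diagonal :: "'c mat \<Rightarrow> int \<Rightarrow> (nat \<times> nat) set" where
  "diagonal A c = {(i, j). i < dim_row A \<and> j < dim_col A \<and> box_value A (i, j) = c}"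

definition zero_one_mat :: "nat mat \<Rightarrow> bool" where
  "zero_one_mat A \<longleftrightarrow> (\<forall>i < dim_row A. \<forall>j < dim_col A. A $$ (i, j) \<in> {0, 1})"

definition graceful_mat :: "nat mat \<Rightarrow> bool" where
  "graceful_mat A \<longleftrightarrow> zero_one_mat A \<and>
     (\<forall>c \<in> {1 .. int (dim_row A) + int (dim_col A) - 1}.
        card {ij \<in> diagonal A c. A $$ ij = 1} \<le> 1)"

definition completely_graceful_mat :: "nat mat \<Rightarrow> bool" where
  "completely_graceful_mat A \<longleftrightarrow> zero_one_mat A \<and>
     (\<forall>c \<in> {1 .. int (dim_row A) + int (dim_col A) - 1}.
        card {ij \<in> diagonal A c. A $$ ij = 1} = 1)"

end

theory Submission
  imports Defs
begin


lemma sg_finE: "simple_graph V E \<Longrightarrow> finite E"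
proof -
  assume a: "simple_graph V E"
  have "E \<subseteq> Pow V"
  proof
    fix e assume "e \<in> E"
    then obtain u v where "u \<in> V" "v \<in> V" "e = {u, v}" using a unfolding simple_graph_def by meson
    thus "e \<in> Pow V" by simp
  qed
  moreover have "finite V" using a unfolding simple_graph_def by simp
  ultimately show ?thesis by (simp add: finite_subset)
qed

lemma sg_edge: assumes "simple_graph V E" "{u, v} \<in> E" shows "u \<in> V \<and> v \<in> V \<and> u \<noteq> v"
proof -
  obtain a b where ab: "a \<in> V" "b \<in> V" "a \<noteq> b" "{u, v} = {a, b}"
    using assms unfolding simple_graph_def by blast
  thus ?thesis by (simp add: doubleton_eq_iff) blast
qed

lemma card_hatV:
  assumes "simple_graph V E" "card V \<le> card E + 1"
  shows "card (hatV V E) = card E + 1"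
proof -
  have fV: "finite V" using assms(1) unfolding simple_graph_def by blast
  have "card (hatV V E) = card (Inl ` V :: ('a + nat) set) + card (Inr ` {..< card E + 1 - card V} :: ('a + nat) set)"
    unfolding hatV_def by (rule card_Un_disjoint) (use fV in auto)
  also have "\<dots> = card V + (card E + 1 - card V)"
    by (simp add: card_image)
  finally show ?thesis using assms(2) by simp
qed

lemma card_hatE: "card (hatE E) = card E"
  unfolding hatE_def by (rule card_image) (simp add: inj_on_def inj_image_eq_iff)

lemma hatE_mem: "{a, b} \<in> hatE E \<longleftrightarrow> (\<exists>u v. a = Inl u \<and> b = Inl v \<and> {u, v} \<in> E)"
proof
  assume "{a, b} \<in> hatE E"
  then obtain e where e: "e \<in> E" "{a, b} = Inl ` e" unfolding hatE_def by blast
  have "a \<in> Inl ` e" "b \<in> Inl ` e" using e(2) by (metis insertI1, metis insertI1 insert_commute)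
  then obtain u v where uv: "a = Inl u" "b = Inl v" "u \<in> e" "v \<in> e" by (elim imageE) simp
  have "Inl ` e = {a, b}" using e(2) by simp
  also have "\<dots> = (Inl ` {u, v})" using uv by simp
  finally have "e = {u, v}" by (rule iffD1[OF inj_image_eq_iff[OF inj_Inl]])
  hence "{u, v} \<in> E" using e(1) by simp
  thus "\<exists>u v. a = Inl u \<and> b = Inl v \<and> {u, v} \<in> E" using uv(1,2) by (intro exI[of _ u] exI[of _ v]) simp
next
  assume "\<exists>u v. a = Inl u \<and> b = Inl v \<and> {u, v} \<in> E"
  then obtain u v where uv: "a = Inl u" "b = Inl v" "{u, v} \<in> E" by blast
  show "{a, b} \<in> hatE E" unfolding hatE_def by (rule image_eqI[of _ _ "{u, v}"]) (use uv in simp_all)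
qed

lemma graceful_char:
  "graceful_mat A \<longleftrightarrow> zero_one_mat A \<and>
    (\<forall>i j i' j'. i < dim_row A \<longrightarrow> j < dim_col A \<longrightarrow> i' < dim_row A \<longrightarrow> j' < dim_col A \<longrightarrow>
       A $$ (i, j) = 1 \<longrightarrow> A $$ (i', j') = 1 \<longrightarrow> int j - int i = int j' - int i' \<longrightarrow> i = i' \<and> j = j')"
  (is "_ \<longleftrightarrow> _ \<and> ?G")
proof -
  have fin: "finite {ij \<in> diagonal A c. A $$ ij = 1}" for c
    by (rule finite_subset[of _ "{..<dim_row A} \<times> {..<dim_col A}"]) (auto simp: diagonal_def)
  show ?thesis
  proof
    assume g: "graceful_mat A"
    show "zero_one_mat A \<and> ?G"
    proof
      show "zero_one_mat A" using g graceful_mat_def by blast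
      show ?G
      proof (intro allI impI)
      fix i j i' j'
      assume h: "i < dim_row A" "j < dim_col A" "i' < dim_row A" "j' < dim_col A"
        "A $$ (i, j) = 1" "A $$ (i', j') = 1" "int j - int i = int j' - int i'"
      define c where "c = box_value A (i, j)"
      have c: "c \<in> {1 .. int (dim_row A) + int (dim_col A) - 1}" using h unfolding c_def box_value_def by auto
      have "card {ij \<in> diagonal A c. A $$ ij = 1} \<le> 1" using g c graceful_mat_def by blast
      have bv: "box_value A (i', j') = c"
        unfolding c_def box_value_def fst_conv snd_conv using h(7) by linarith
      have m1: "(i, j) \<in> {ij \<in> diagonal A c. A $$ ij = 1}"
        using h(1,2,5) unfolding c_def diagonal_def by blast
      have m2: "(i', j') \<in> {ij \<in> diagonal A c. A $$ ij = 1}"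
        using h(3,4,6) bv unfolding diagonal_def by blast
      have "card {ij \<in> diagonal A c. A $$ ij = 1} \<le> Suc 0"
        using \<open>card {ij \<in> diagonal A c. A $$ ij = 1} \<le> 1\<close> by simp
      hence "\<forall>a1\<in>{ij \<in> diagonal A c. A $$ ij = 1}. \<forall>a2\<in>{ij \<in> diagonal A c. A $$ ij = 1}. a1 = a2"
        by (rule iffD1[OF card_le_Suc0_iff_eq[OF fin[of c]]])
      hence "(i, j) = (i', j')" using m1 m2 by (meson bspec)
      thus "i = i' \<and> j = j'" by simp
      qed
    qed
  next
    assume h: "zero_one_mat A \<and> ?G"
    show "graceful_mat A" unfolding graceful_mat_def
    proof (intro conjI ballI)
      show "zero_one_mat A" using h by blast
      fix c
      have "\<forall>a1\<in>{ij \<in> diagonal A c. A $$ ij = 1}. \<forall>a2\<in>{ij \<in> diagonal A c. A $$ ij = 1}. a1 = a2"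
      proof (intro ballI)
        fix a1 a2 assume a: "a1 \<in> {ij \<in> diagonal A c. A $$ ij = 1}" "a2 \<in> {ij \<in> diagonal A c. A $$ ij = 1}"
        obtain i j where a1: "a1 = (i, j)" by force
        obtain i' j' where a2: "a2 = (i', j')" by force
        have "i < dim_row A" "j < dim_col A" "i' < dim_row A" "j' < dim_col A"
          "A $$ (i, j) = 1" "A $$ (i', j') = 1" "int j - int i = int j' - int i'"
          using a unfolding a1 a2 diagonal_def box_value_def by auto
        hence "i = i' \<and> j = j'" using h by blast
        thus "a1 = a2" using a1 a2 by simp
      qed
      hence "card {ij \<in> diagonal A c. A $$ ij = 1} \<le> Suc 0"
        by (rule iffD2[OF card_le_Suc0_iff_eq[OF fin[of c]]])
      thus "card {ij \<in> diagonal A c. A $$ ij = 1} \<le> 1" by simp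
    qed
  qed
qed




lemma zs_key:
  assumes dz: "distinct zs" and sz: "set zs = hatV V E"
    and fz: "\<forall>v\<in>V. 0 \<le> f v \<and> f v < int (length zs) \<and> zs ! nat (f v) = Inl v"
    and i: "i < length zs"
  shows "zs ! i = Inl u \<longleftrightarrow> u \<in> V \<and> f u = int i"
proof
  assume h: "zs ! i = Inl u"
  have "Inl u \<in> set zs" using h i nth_mem by metis
  hence "Inl u \<in> hatV V E" using sz by simp
  hence u: "u \<in> V" unfolding hatV_def by auto
  have fu: "0 \<le> f u" "f u < int (length zs)" "zs ! nat (f u) = Inl u" using fz u by auto
  have "nat (f u) < length zs" using fu(1,2) by (simp add: nat_less_iff)
  moreover have "zs ! nat (f u) = zs ! i" using fu(3) h by simp
  ultimately have "nat (f u) = i" using dz i nth_eq_iff_index_eq by blast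
  thus "u \<in> V \<and> f u = int i" using u fu(1) by auto
next
  assume h: "u \<in> V \<and> f u = int i"
  hence "zs ! nat (f u) = Inl u" using fz by auto
  thus "zs ! i = Inl u" using h by simp
qed

lemma mat_cg:
  assumes g: "graceful_mat A"
    and cnt: "int (dim_row A) + int (dim_col A) - 1 \<le> int (card {(i,j). i < dim_row A \<and> j < dim_col A \<and> A $$ (i,j) = 1})"
  shows "completely_graceful_mat A"
proof -
  define S where "S = {(i,j). i < dim_row A \<and> j < dim_col A \<and> A $$ (i,j) = 1}"
  define d where "d = box_value A"
  define R where "R = {1 .. int (dim_row A) + int (dim_col A) - 1}"
  have finS: "finite S"
    by (rule finite_subset[of _ "{..<dim_row A} \<times> {..<dim_col A}"]) (auto simp: S_def)
  have G: "\<And>i j i' j'. i < dim_row A \<Longrightarrow> j < dim_col A \<Longrightarrow> i' < dim_row A \<Longrightarrow> j' < dim_col A \<Longrightarrow>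
       A $$ (i, j) = 1 \<Longrightarrow> A $$ (i', j') = 1 \<Longrightarrow> int j - int i = int j' - int i' \<Longrightarrow> i = i' \<and> j = j'"
    using g unfolding graceful_char by blast
  have inj: "inj_on d S"
  proof (rule inj_onI)
    fix x y assume x: "x \<in> S" and y: "y \<in> S" and dxy: "d x = d y"
    obtain i j where xe: "x = (i, j)" by force
    obtain i' j' where ye: "y = (i', j')" by force
    have hx: "i < dim_row A" "j < dim_col A" "A $$ (i, j) = 1" using x xe S_def by auto
    have hy: "i' < dim_row A" "j' < dim_col A" "A $$ (i', j') = 1" using y ye S_def by auto
    have "int j - int i = int j' - int i'" using dxy unfolding xe ye d_def box_value_def by simp
    hence "i = i' \<and> j = j'" using G hx hy by blast
    thus "x = y" using xe ye by simp
  qed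
  have sub: "d ` S \<subseteq> R"
  proof
    fix c assume "c \<in> d ` S"
    then obtain i j where "(i, j) \<in> S" "c = d (i, j)" by force
    thus "c \<in> R" unfolding S_def R_def d_def box_value_def by auto
  qed
  have "card R \<le> card (d ` S)"
  proof -
    have "card R = nat (int (dim_row A) + int (dim_col A) - 1)" unfolding R_def by simp
    also have "\<dots> \<le> card S" using cnt unfolding S_def by linarith
    also have "\<dots> = card (d ` S)" using card_image[OF inj] by simp
    finally show ?thesis .
  qed
  hence eq: "d ` S = R" using card_seteq[OF _ sub] unfolding R_def by simp
  show ?thesis unfolding completely_graceful_mat_def
  proof (intro conjI ballI)
    show "zero_one_mat A" using g graceful_mat_def by blast
    fix c assume c: "c \<in> {1 .. int (dim_row A) + int (dim_col A) - 1}"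
    define T where "T = {ij \<in> diagonal A c. A $$ ij = 1}"
    have finT: "finite T"
      by (rule finite_subset[of _ "{..<dim_row A} \<times> {..<dim_col A}"]) (auto simp: T_def diagonal_def)
    have le: "card T \<le> 1" using g c unfolding graceful_mat_def T_def by blast
    have "c \<in> d ` S" using eq c R_def by simp
    then obtain i j where ij: "(i, j) \<in> S" "c = d (i, j)" by force
    have "(i, j) \<in> T" using ij unfolding T_def S_def diagonal_def d_def by simp
    hence "card T > 0" using finT card_gt_0_iff by blast
    thus "card T = 1" using le by simp
  qed
qed




lemma core:
  assumes sg: "simple_graph V E"
    and dz: "distinct zs" and sz: "set zs = hatV V E" and lz: "length zs = card E + 1"
    and fz: "\<forall>v\<in>V. 0 \<le> f v \<and> f v < int (length zs) \<and> zs ! nat (f v) = Inl v"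
    and p: "p = k + 1" "p \<le> length zs"
  shows "alpha_labeling V E f (int k) \<longleftrightarrow>
     is_bipartition (hatV V E) (hatE E) (set (take p zs)) (set (drop p zs)) \<and>
     graceful_mat (biadj (hatE E) (take p zs) (drop p zs))"
proof -
  define xs where "xs = take p zs"
  define ys where "ys = drop p zs"
  note key = zs_key[OF dz sz fz]
  have fzv: "0 \<le> f v" "f v < int (length zs)" "zs ! nat (f v) = Inl v" if "v \<in> V" for v
    using fz that by auto
  have lxs: "length xs = p" using p xs_def by simp
  have lys: "length ys = length zs - p" using ys_def by simp
  have xs_nth: "xs ! i = zs ! i" if "i < p" for i using xs_def that by simp
  have ys_nth: "ys ! j = zs ! (p + j)" if "j < length ys" for j using ys_def that p by simp
  have inX: "Inl u \<in> set xs \<longleftrightarrow> u \<in> V \<and> f u \<le> int k" for u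
  proof
    assume "Inl u \<in> set xs"
    then obtain i where i: "i < p" "xs ! i = Inl u" using lxs by (auto simp: in_set_conv_nth)
    hence "zs ! i = Inl u" "i < length zs" using xs_nth p by auto
    hence "u \<in> V \<and> f u = int i" using key by blast
    thus "u \<in> V \<and> f u \<le> int k" using i p by auto
  next
    assume u: "u \<in> V \<and> f u \<le> int k"
    hence lt: "nat (f u) < p" using fzv[of u] p by auto
    hence "xs ! nat (f u) = Inl u" using xs_nth fzv[of u] u by auto
    thus "Inl u \<in> set xs" using lt lxs by (metis nth_mem)
  qed
  have inY: "Inl u \<in> set ys \<longleftrightarrow> u \<in> V \<and> int k < f u" for u
  proof
    assume "Inl u \<in> set ys"
    then obtain j where j: "j < length ys" "ys ! j = Inl u" by (auto simp: in_set_conv_nth)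
    hence "zs ! (p + j) = Inl u" "p + j < length zs" using ys_nth lys by auto
    hence "u \<in> V \<and> f u = int (p + j)" using key by blast
    thus "u \<in> V \<and> int k < f u" using p by auto
  next
    assume u: "u \<in> V \<and> int k < f u"
    define j where "j = nat (f u) - p"
    have nf: "nat (f u) = p + j" "j < length ys" using fzv[of u] u p lys j_def by auto
    have "ys ! j = zs ! nat (f u)" using ys_nth[OF nf(2)] nf(1) by simp
    hence "ys ! j = Inl u" using fzv[of u] u by simp
    thus "Inl u \<in> set ys" using nf(2) by (metis nth_mem)
  qed
  have inj: "inj_on f V"
  proof (rule inj_onI)
    fix a b assume "a \<in> V" "b \<in> V" "f a = f b"
    hence "Inl a = (Inl b :: 'a + nat)" using fzv by metis
    thus "a = b" by simp
  qed
  have rng: "f ` V \<subseteq> {0..int (card E)}" using fzv lz by fastforce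
  have kr: "int k \<in> {0..int (card E)}" using p lz by simp
  define S where "S \<longleftrightarrow> (\<forall>u v. {u, v} \<in> E \<longrightarrow> (f u \<le> int k \<and> int k < f v) \<or> (f v \<le> int k \<and> int k < f u))"
  define D where "D \<longleftrightarrow> (\<forall>u v u' v'. {u, v} \<in> E \<longrightarrow> {u', v'} \<in> E \<longrightarrow>
        \<bar>f u - f v\<bar> = \<bar>f u' - f v'\<bar> \<longrightarrow> {u, v} = {u', v'})"
  have alpha_iff: "alpha_labeling V E f (int k) \<longleftrightarrow> S \<and> D"
    unfolding alpha_labeling_def beta_labeling_def S_def D_def using inj rng kr by blast
  have un: "set xs \<union> set ys = hatV V E" using sz unfolding xs_def ys_def
    by (metis append_take_drop_id set_append)
  have dj: "set xs \<inter> set ys = {}" using dz unfolding xs_def ys_def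
    by (metis append_take_drop_id distinct_append)
  have bip_iff: "is_bipartition (hatV V E) (hatE E) (set xs) (set ys) \<longleftrightarrow> S"
  proof
    assume B: "is_bipartition (hatV V E) (hatE E) (set xs) (set ys)"
    show S unfolding S_def
    proof (intro allI impI)
      fix u v assume e: "{u, v} \<in> E"
      have "\<forall>e\<in>hatE E. \<exists>x y. x \<in> set xs \<and> y \<in> set ys \<and> e = {x, y}"
        using B unfolding is_bipartition_def by (elim conjE)
      moreover have "{Inl u, Inl v} \<in> hatE E" unfolding hatE_mem by (intro exI[of _ u] exI[of _ v]) (simp add: e)
      ultimately have "\<exists>x y. x \<in> set xs \<and> y \<in> set ys \<and> {Inl u, Inl v} = {x, y}"
        by (rule bspec)
      then obtain x y where xy: "x \<in> set xs" "y \<in> set ys" "{Inl u, Inl v} = {x, y}"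
        by (elim exE conjE)
      hence "(x = Inl u \<and> y = Inl v) \<or> (x = Inl v \<and> y = Inl u)" by (auto simp: doubleton_eq_iff)
      thus "(f u \<le> int k \<and> int k < f v) \<or> (f v \<le> int k \<and> int k < f u)"
        using xy(1,2) inX inY by blast
    qed
  next
    assume S: S
    show "is_bipartition (hatV V E) (hatE E) (set xs) (set ys)" unfolding is_bipartition_def
    proof (intro conjI ballI)
      show "set xs \<union> set ys = hatV V E" by (rule un)
      show "set xs \<inter> set ys = {}" by (rule dj)
      fix e assume "e \<in> hatE E"
      then obtain e0 where e0: "e0 \<in> E" "e = Inl ` e0" unfolding hatE_def by blast
      then obtain u v where uv: "e0 = {u, v}" using sg unfolding simple_graph_def by meson
      have uvV: "u \<in> V" "v \<in> V" using sg_edge[OF sg] e0(1) uv by auto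
      have ee: "e = {Inl u, Inl v}" using e0 uv by simp
      have "(f u \<le> int k \<and> int k < f v) \<or> (f v \<le> int k \<and> int k < f u)"
        using S e0(1) uv unfolding S_def by blast
      thus "\<exists>x y. x \<in> set xs \<and> y \<in> set ys \<and> e = {x, y}"
      proof
        assume "f u \<le> int k \<and> int k < f v"
        hence "Inl u \<in> set xs" "Inl v \<in> set ys" using inX inY uvV by auto
        thus ?thesis using ee by blast
      next
        assume "f v \<le> int k \<and> int k < f u"
        hence "Inl v \<in> set xs" "Inl u \<in> set ys" using inX inY uvV by auto
        thus ?thesis using ee by (intro exI[of _ "Inl v"] exI[of _ "Inl u"]) auto
      qed
    qed
  qed
  define A where "A = biadj (hatE E) xs ys"
  have dA: "dim_row A = p" "dim_col A = length ys" unfolding A_def biadj_def using lxs by simp_all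
  have Aij: "A $$ (i, j) = (if {xs ! i, ys ! j} \<in> hatE E then 1 else 0)" if "i < p" "j < length ys" for i j
    unfolding A_def biadj_def using that lxs by simp
  have zo: "zero_one_mat A" unfolding zero_one_mat_def using Aij dA by simp
  have entry: "A $$ (i, j) = 1 \<longleftrightarrow> (\<exists>u v. {u, v} \<in> E \<and> f u = int i \<and> f v = int (p + j))"
    if ij: "i < p" "j < length ys" for i j
  proof -
    have il: "i < length zs" "p + j < length zs" using ij p lys by auto
    have "A $$ (i, j) = 1 \<longleftrightarrow> {zs ! i, zs ! (p + j)} \<in> hatE E"
      using Aij[OF ij] xs_nth[OF ij(1)] ys_nth[OF ij(2)] by simp
    also have "\<dots> \<longleftrightarrow> (\<exists>u v. zs ! i = Inl u \<and> zs ! (p + j) = Inl v \<and> {u, v} \<in> E)"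
      by (rule hatE_mem)
    also have "\<dots> \<longleftrightarrow> (\<exists>u v. {u, v} \<in> E \<and> f u = int i \<and> f v = int (p + j))"
      using key[OF il(1)] key[OF il(2)] sg_edge[OF sg] by blast
    finally show ?thesis .
  qed
  have orient: "\<exists>a b. {u, v} = {a, b} \<and> {a, b} \<in> E \<and> f a \<le> int k \<and> int k < f b"
    if S and e: "{u, v} \<in> E" for u v
  proof -
    have "(f u \<le> int k \<and> int k < f v) \<or> (f v \<le> int k \<and> int k < f u)"
      using that unfolding S_def by blast
    thus ?thesis
    proof
      assume "f u \<le> int k \<and> int k < f v" thus ?thesis using e by blast
    next
      assume "f v \<le> int k \<and> int k < f u" thus ?thesis using e
        by (intro exI[of _ v] exI[of _ u]) (auto simp: insert_commute)
    qed
  qed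
  have absd: "\<bar>f u - f v\<bar> = \<bar>f a - f b\<bar>" if "{u, v} = {a, b}" for u v a b
    using that by (auto simp: doubleton_eq_iff abs_minus_commute)
  have grace_iff: "graceful_mat A \<longleftrightarrow> D" if S: S
  proof
    assume g: "graceful_mat A"
    have G: "\<And>i j i' j'. i < p \<Longrightarrow> j < length ys \<Longrightarrow> i' < p \<Longrightarrow> j' < length ys \<Longrightarrow>
       A $$ (i, j) = 1 \<Longrightarrow> A $$ (i', j') = 1 \<Longrightarrow> int j - int i = int j' - int i' \<Longrightarrow> i = i' \<and> j = j'"
      using g dA unfolding graceful_char by metis
    show D unfolding D_def
    proof (intro allI impI)
      fix u v u' v' assume e1: "{u, v} \<in> E" and e2: "{u', v'} \<in> E"
        and ab: "\<bar>f u - f v\<bar> = \<bar>f u' - f v'\<bar>"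
      obtain a b where o1: "{u, v} = {a, b}" "{a, b} \<in> E" "f a \<le> int k" "int k < f b"
        using orient[OF S e1] by blast
      obtain a' b' where o2: "{u', v'} = {a', b'}" "{a', b'} \<in> E" "f a' \<le> int k" "int k < f b'"
        using orient[OF S e2] by blast
      have V1: "a \<in> V" "b \<in> V" using sg_edge[OF sg o1(2)] by auto
      have V2: "a' \<in> V" "b' \<in> V" using sg_edge[OF sg o2(2)] by auto
      define i where "i = nat (f a)"
      define j where "j = nat (f b) - p"
      define i' where "i' = nat (f a')"
      define j' where "j' = nat (f b') - p"
      have fa: "f a = int i" "f b = int (p + j)" "i < p" "j < length ys"
        using fzv[OF V1(1)] fzv[OF V1(2)] o1 p lys unfolding i_def j_def by auto
      have fa': "f a' = int i'" "f b' = int (p + j')" "i' < p" "j' < length ys"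
        using fzv[OF V2(1)] fzv[OF V2(2)] o2 p lys unfolding i'_def j'_def by auto
      have A1: "A $$ (i, j) = 1" using entry[OF fa(3,4)] o1(2) fa(1,2) by blast
      have A2: "A $$ (i', j') = 1" using entry[OF fa'(3,4)] o2(2) fa'(1,2) by blast
      have "\<bar>f a - f b\<bar> = \<bar>f a' - f b'\<bar>" using ab absd[OF o1(1)] absd[OF o2(1)] by simp
      hence "int j - int i = int j' - int i'" using fa fa' by simp
      hence "i = i' \<and> j = j'" using G[OF fa(3,4) fa'(3,4) A1 A2] by blast
      hence "f a = f a'" "f b = f b'" using fa fa' by auto
      hence "a = a'" "b = b'" using inj V1 V2 inj_onD by metis+
      thus "{u, v} = {u', v'}" using o1(1) o2(1) by simp
    qed
  next
    assume D: D
    show "graceful_mat A" unfolding graceful_char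
    proof (intro conjI allI impI)
      show "zero_one_mat A" by (rule zo)
      fix i j i' j'
      assume h: "i < dim_row A" "j < dim_col A" "i' < dim_row A" "j' < dim_col A"
        "A $$ (i, j) = 1" "A $$ (i', j') = 1" "int j - int i = int j' - int i'"
      have ip: "i < p" "j < length ys" "i' < p" "j' < length ys" using h(1-4) dA by simp_all
      obtain u v where uv: "{u, v} \<in> E" "f u = int i" "f v = int (p + j)"
        using iffD1[OF entry[OF ip(1,2)] h(5)] by blast
      obtain u' v' where uv': "{u', v'} \<in> E" "f u' = int i'" "f v' = int (p + j')"
        using iffD1[OF entry[OF ip(3,4)] h(6)] by blast
      have "\<bar>f u - f v\<bar> = \<bar>f u' - f v'\<bar>" using uv uv' h(7) by simp
      hence eq: "{u, v} = {u', v'}" using D uv(1) uv'(1) unfolding D_def by blast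
      have "i < p" "i' < p" using h dA by auto
      hence "u = u' \<and> v = v'"
        using eq uv uv' by (auto simp: doubleton_eq_iff)
      thus "i = i'" "j = j'" using uv uv' by auto
    qed
  qed
  show ?thesis
    unfolding xs_def[symmetric] ys_def[symmetric] A_def[symmetric]
    using alpha_iff bip_iff grace_iff by blast
qed




lemma hat_cg:
  assumes sg: "simple_graph V E" and n: "card V \<le> card E + 1"
    and ob: "ordered_bipartition (hatV V E) (hatE E) xs ys"
    and g: "graceful_mat (biadj (hatE E) xs ys)"
  shows "completely_graceful_mat (biadj (hatE E) xs ys)"
proof -
  define A where "A = biadj (hatE E) xs ys"
  have dims: "dim_row A = length xs" "dim_col A = length ys" by (simp_all add: A_def biadj_def)
  have Aij: "A $$ (i, j) = (if {xs ! i, ys ! j} \<in> hatE E then 1 else 0)" if "i < length xs" "j < length ys" for i j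
    unfolding A_def biadj_def using that by simp
  have dx: "distinct xs" "distinct ys" and un: "set xs \<union> set ys = hatV V E"
    and dj: "set xs \<inter> set ys = {}"
    and ed: "\<forall>e\<in>hatE E. \<exists>x y. x \<in> set xs \<and> y \<in> set ys \<and> e = {x, y}"
    using ob unfolding ordered_bipartition_def is_bipartition_def by simp_all
  have "length xs + length ys = card E + 1"
  proof -
    have "card (set xs \<union> set ys) = card (set xs) + card (set ys)"
      using dj by (simp add: card_Un_disjoint)
    thus ?thesis using un card_hatV[OF sg n] dx by (simp add: distinct_card)
  qed
  define S where "S = {(i,j). i < dim_row A \<and> j < dim_col A \<and> A $$ (i,j) = 1}"
  have bij: "bij_betw (\<lambda>(i, j). {xs ! i, ys ! j}) S (hatE E)"
    unfolding bij_betw_def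
  proof
    show "inj_on (\<lambda>(i, j). {xs ! i, ys ! j}) S"
    proof (rule inj_onI)
      fix x y assume x: "x \<in> S" and y: "y \<in> S"
        and eq: "(\<lambda>(i, j). {xs ! i, ys ! j}) x = (\<lambda>(i, j). {xs ! i, ys ! j}) y"
      obtain i j where xe: "x = (i, j)" by force
      obtain i' j' where ye: "y = (i', j')" by force
      have b: "i < length xs" "j < length ys" "i' < length xs" "j' < length ys"
        using x y xe ye dims S_def by auto
      have e: "{xs ! i, ys ! j} = {xs ! i', ys ! j'}" using eq xe ye by simp
      have m1: "xs ! i \<in> set xs" using b(1) by (rule nth_mem)
      have m2: "ys ! j' \<in> set ys" using b(4) by (rule nth_mem)
      have n1: "xs ! i \<noteq> ys ! j'" using dj m1 m2 by auto
      have "xs ! i = xs ! i' \<and> ys ! j = ys ! j'"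
        using e n1 by (auto simp: doubleton_eq_iff)
      hence "i = i' \<and> j = j'" using dx b nth_eq_iff_index_eq by metis
      thus "x = y" using xe ye by simp
    qed
    show "(\<lambda>(i, j). {xs ! i, ys ! j}) ` S = hatE E"
    proof
      show "(\<lambda>(i, j). {xs ! i, ys ! j}) ` S \<subseteq> hatE E"
      proof
        fix e assume "e \<in> (\<lambda>(i, j). {xs ! i, ys ! j}) ` S"
        then obtain i j where ij: "(i, j) \<in> S" "e = {xs ! i, ys ! j}" by force
        have b: "i < length xs" "j < length ys" "A $$ (i, j) = 1" using ij dims S_def by auto
        show "e \<in> hatE E"
        proof (rule ccontr)
          assume "e \<notin> hatE E"
          hence "A $$ (i, j) = 0" using Aij[OF b(1,2)] ij(2) by simp
          thus False using b(3) by simp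
        qed
      qed
      show "hatE E \<subseteq> (\<lambda>(i, j). {xs ! i, ys ! j}) ` S"
      proof
        fix e assume e: "e \<in> hatE E"
        have "\<exists>x y. x \<in> set xs \<and> y \<in> set ys \<and> e = {x, y}" using ed e by (rule bspec)
        then obtain x y where xy: "x \<in> set xs" "y \<in> set ys" "e = {x, y}" by (elim exE conjE)
        obtain i where i: "i < length xs" "xs ! i = x" using xy(1) by (auto simp: in_set_conv_nth)
        obtain j where j: "j < length ys" "ys ! j = y" using xy(2) by (auto simp: in_set_conv_nth)
        have "A $$ (i, j) = 1" using Aij[OF i(1) j(1)] i j xy e by simp
        hence "(i, j) \<in> S" using i j dims S_def by simp
        moreover have "e = (\<lambda>(i, j). {xs ! i, ys ! j}) (i, j)" using i j xy by simp
        ultimately show "e \<in> (\<lambda>(i, j). {xs ! i, ys ! j}) ` S" by (rule rev_image_eqI)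
      qed
    qed
  qed
  have "card S = card E" using bij_betw_same_card[OF bij] card_hatE by simp
  hence "int (dim_row A) + int (dim_col A) - 1 \<le> int (card {(i,j). i < dim_row A \<and> j < dim_col A \<and> A $$ (i,j) = 1})"
    using dims \<open>length xs + length ys = card E + 1\<close> unfolding S_def by simp
  thus ?thesis using mat_cg g unfolding A_def by blast
qed

lemma compl_iff:
  assumes sg: "simple_graph V E"
  shows "complete_alpha_labeling V E f k \<longleftrightarrow> alpha_labeling V E f k \<and> card V = card E + 1"
proof
  assume h: "complete_alpha_labeling V E f k"
  hence "bij_betw f V {0..int (card E)}" unfolding complete_alpha_labeling_def by blast
  hence "card V = card {0..int (card E)}" by (rule bij_betw_same_card)
  thus "alpha_labeling V E f k \<and> card V = card E + 1" using h unfolding complete_alpha_labeling_def by simp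
next
  assume h: "alpha_labeling V E f k \<and> card V = card E + 1"
  have inj: "inj_on f V" and rng: "f ` V \<subseteq> {0..int (card E)}"
    using h unfolding alpha_labeling_def beta_labeling_def by blast+
  have "card {0..int (card E)} \<le> card (f ` V)" using h card_image[OF inj] by simp
  hence "f ` V = {0..int (card E)}" using card_seteq[OF _ rng] by simp
  hence "bij_betw f V {0..int (card E)}" using inj unfolding bij_betw_def by blast
  thus "complete_alpha_labeling V E f k" using h unfolding complete_alpha_labeling_def by blast
qed




lemma fwd:
  assumes sg: "simple_graph V E" and al: "alpha_labeling V E f (int k)"
  shows "card V \<le> card E + 1 \<and> bipartite V E \<and>
    (\<exists>xs ys. ordered_bipartition (hatV V E) (hatE E) xs ys \<and>
       graceful_mat (biadj (hatE E) xs ys) \<and> dim_row (biadj (hatE E) xs ys) = k + 1)"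
proof -
  define m where "m = card E"
  have fV: "finite V" using sg unfolding simple_graph_def by simp
  have inj: "inj_on f V" and rng: "f ` V \<subseteq> {0..int m}" and km: "int k \<le> int m"
    and str: "\<forall>u v. {u, v} \<in> E \<longrightarrow> (f u \<le> int k \<and> int k < f v) \<or> (f v \<le> int k \<and> int k < f u)"
    using al unfolding alpha_labeling_def beta_labeling_def m_def by simp_all
  have n: "card V \<le> m + 1"
  proof -
    have "card V = card (f ` V)" using card_image[OF inj] by simp
    also have "\<dots> \<le> card {0..int m}" by (rule card_mono) (simp_all add: rng)
    finally show ?thesis by simp
  qed
  have bip: "bipartite V E" unfolding bipartite_def is_bipartition_def
  proof (rule exI[of _ "{v \<in> V. f v \<le> int k}"], rule exI[of _ "{v \<in> V. int k < f v}"], intro conjI ballI)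
    show "{v \<in> V. f v \<le> int k} \<union> {v \<in> V. int k < f v} = V" by auto
    show "{v \<in> V. f v \<le> int k} \<inter> {v \<in> V. int k < f v} = {}" by auto
    fix e assume e: "e \<in> E"
    then obtain u v where uv: "e = {u, v}" using sg unfolding simple_graph_def by meson
    have uvV: "u \<in> V" "v \<in> V" using sg_edge[OF sg] e uv by auto
    have "(f u \<le> int k \<and> int k < f v) \<or> (f v \<le> int k \<and> int k < f u)" using str e uv by simp
    thus "\<exists>x y. x \<in> {v \<in> V. f v \<le> int k} \<and> y \<in> {v \<in> V. int k < f v} \<and> e = {x, y}"
    proof
      assume "f u \<le> int k \<and> int k < f v"
      thus ?thesis using uv uvV by (intro exI[of _ u] exI[of _ v]) simp
    next
      assume "f v \<le> int k \<and> int k < f u"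
      thus ?thesis using uv uvV by (intro exI[of _ v] exI[of _ u]) (simp add: insert_commute)
    qed
  qed
  define h0 where "h0 = (\<lambda>v. nat (f v))"
  have f0: "0 \<le> f v" "f v \<le> int m" if "v \<in> V" for v using rng that by auto
  have inj0: "inj_on h0 V"
  proof (rule inj_onI)
    fix a b assume a: "a \<in> V" "b \<in> V" "h0 a = h0 b"
    hence "f a = f b" using f0[OF a(1)] f0[OF a(2)] unfolding h0_def by simp
    thus "a = b" using inj a inj_onD by metis
  qed
  define L where "L = h0 ` V"
  have nl: "nat (f v) < m + 1" if "v \<in> V" for v using f0[OF that] by (simp add: nat_less_iff)
  have L: "L \<subseteq> {..<m+1}" unfolding L_def h0_def using nl by auto
  define U where "U = {..<m+1} - L"
  have cL: "card L = card V" unfolding L_def using card_image[OF inj0] .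
  have cU: "card U = m + 1 - card V" unfolding U_def using card_Diff_subset[OF _ L] cL
    by (simp add: finite_subset[OF L])
  define R where "R = (Inr ` {..< m + 1 - card V} :: ('a + nat) set)"
  have cR: "card R = m + 1 - card V" unfolding R_def by (simp add: card_image)
  obtain h where h: "bij_betw h U R"
    using finite_same_card_bij[of U R] cU cR unfolding U_def R_def by auto
  define g where "g = (\<lambda>i. if i \<in> L then Inl (inv_into V h0 i) else h i)"
  have g_f: "g (nat (f v)) = Inl v" if "v \<in> V" for v
  proof -
    have "nat (f v) \<in> L" using that unfolding L_def h0_def by simp
    moreover have "inv_into V h0 (h0 v) = v" using inv_into_f_f[OF inj0 that] .
    ultimately show ?thesis unfolding g_def h0_def by simp
  qed
  have hatV_eq: "hatV V E = Inl ` V \<union> R" unfolding hatV_def R_def m_def by simp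
  have gim: "g ` {..<m+1} = hatV V E"
  proof
    show "g ` {..<m+1} \<subseteq> hatV V E"
    proof
      fix x assume "x \<in> g ` {..<m+1}"
      then obtain i where i: "i < m + 1" "x = g i" by auto
      show "x \<in> hatV V E"
      proof (cases "i \<in> L")
        case True
        hence "inv_into V h0 i \<in> V" unfolding L_def by (rule inv_into_into)
        thus ?thesis using True i unfolding g_def hatV_eq by simp
      next
        case False
        hence "i \<in> U" using i unfolding U_def by simp
        hence "h i \<in> R" using h bij_betwE by blast
        thus ?thesis using False i unfolding g_def hatV_eq by simp
      qed
    qed
    show "hatV V E \<subseteq> g ` {..<m+1}"
    proof
      fix x assume "x \<in> hatV V E"
      hence "x \<in> Inl ` V \<or> x \<in> R" unfolding hatV_eq by simp
      thus "x \<in> g ` {..<m+1}"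
      proof
        assume "x \<in> Inl ` V"
        then obtain v where v: "v \<in> V" "x = Inl v" by blast
        have "nat (f v) < m + 1" using nl[OF v(1)] .
        thus ?thesis using g_f[OF v(1)] v(2) by (metis lessThan_iff rev_image_eqI)
      next
        assume "x \<in> R"
        then obtain u where u: "u \<in> U" "x = h u" using h bij_betw_imp_surj_on by blast
        have "u \<notin> L" "u < m + 1" using u unfolding U_def by auto
        hence "g u = x" using u unfolding g_def by simp
        thus ?thesis using \<open>u < m + 1\<close> by (metis lessThan_iff rev_image_eqI)
      qed
    qed
  qed
  have ginj: "inj_on g {..<m+1}"
  proof (rule eq_card_imp_inj_on)
    show "finite {..<m+1}" by simp
    show "card (g ` {..<m+1}) = card {..<m+1}" using gim card_hatV[OF sg] n unfolding m_def by simp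
  qed
  define zs where "zs = map g [0..<m+1]"
  have su: "set [0..<m+1] = {..<m+1}" by auto
  have dz: "distinct zs" unfolding zs_def distinct_map su using ginj by (simp del: upt_Suc)
  have sz: "set zs = hatV V E" unfolding zs_def set_map su using gim .
  have lz: "length zs = card E + 1" unfolding zs_def m_def by simp
  have fz: "\<forall>v\<in>V. 0 \<le> f v \<and> f v < int (length zs) \<and> zs ! nat (f v) = Inl v"
  proof
    fix v assume v: "v \<in> V"
    have "nat (f v) < m + 1" using nl[OF v] .
    thus "0 \<le> f v \<and> f v < int (length zs) \<and> zs ! nat (f v) = Inl v"
      using f0[OF v] g_f[OF v] unfolding zs_def by (simp del: upt_Suc)
  qed
  have p: "k + 1 \<le> length zs" using km lz unfolding m_def by simp
  have res: "is_bipartition (hatV V E) (hatE E) (set (take (k+1) zs)) (set (drop (k+1) zs)) \<and>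
     graceful_mat (biadj (hatE E) (take (k+1) zs) (drop (k+1) zs))"
    using core[OF sg dz sz lz fz refl p] al by simp
  have ob: "ordered_bipartition (hatV V E) (hatE E) (take (k+1) zs) (drop (k+1) zs)"
    unfolding ordered_bipartition_def using res dz by simp
  have dr: "dim_row (biadj (hatE E) (take (k+1) zs) (drop (k+1) zs)) = k + 1"
    unfolding biadj_def using p by simp
  show ?thesis using n bip ob res dr unfolding m_def by blast
qed

lemma bwd:
  assumes sg: "simple_graph V E" and n: "card V \<le> card E + 1"
    and ob: "ordered_bipartition (hatV V E) (hatE E) xs ys"
    and g: "graceful_mat (biadj (hatE E) xs ys)"
    and d: "dim_row (biadj (hatE E) xs ys) = k + 1"
  shows "\<exists>f. alpha_labeling V E f (int k)"
proof -
  define zs where "zs = xs @ ys"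
  have dx: "distinct xs" "distinct ys" and un: "set xs \<union> set ys = hatV V E"
    and dj: "set xs \<inter> set ys = {}"
    and bp: "is_bipartition (hatV V E) (hatE E) (set xs) (set ys)"
    using ob unfolding ordered_bipartition_def is_bipartition_def by simp_all
  have dz: "distinct zs" unfolding zs_def using dx dj by simp
  have sz: "set zs = hatV V E" unfolding zs_def using un by simp
  have lz: "length zs = card E + 1"
    using distinct_card[OF dz] sz card_hatV[OF sg n] by simp
  define f where "f = (\<lambda>v. int (SOME i. i < length zs \<and> zs ! i = Inl v))"
  have fz: "\<forall>v\<in>V. 0 \<le> f v \<and> f v < int (length zs) \<and> zs ! nat (f v) = Inl v"
  proof
    fix v assume v: "v \<in> V"
    have "Inl v \<in> set zs" using sz v unfolding hatV_def by simp
    hence "\<exists>i. i < length zs \<and> zs ! i = Inl v" by (simp add: in_set_conv_nth)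
    hence "(SOME i. i < length zs \<and> zs ! i = Inl v) < length zs \<and> zs ! (SOME i. i < length zs \<and> zs ! i = Inl v) = Inl v"
      by (rule someI_ex)
    thus "0 \<le> f v \<and> f v < int (length zs) \<and> zs ! nat (f v) = Inl v" unfolding f_def by simp
  qed
  have lx: "length xs = k + 1" using d unfolding biadj_def by simp
  have tk: "take (k+1) zs = xs" "drop (k+1) zs = ys" unfolding zs_def using lx by simp_all
  have p: "k + 1 \<le> length zs" unfolding zs_def using lx by simp
  have "alpha_labeling V E f (int k)"
    using core[OF sg dz sz lz fz refl p] bp g unfolding tk by simp
  thus ?thesis by blast
qed

theorem theorem2p6:
  fixes V :: "'a set" and E :: "'a set set" and k :: nat
  assumes "simple_graph V E"
  shows "((\<exists>f. alpha_labeling V E f (int k)) \<longleftrightarrow>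
            card V \<le> card E + 1 \<and> bipartite V E \<and>
            (\<exists>xs ys. ordered_bipartition (hatV V E) (hatE E) xs ys \<and>
                     graceful_mat (biadj (hatE E) xs ys) \<and>
                     dim_row (biadj (hatE E) xs ys) = k + 1))
       \<and> ((\<exists>f. complete_alpha_labeling V E f (int k)) \<longleftrightarrow>
            card V = card E + 1 \<and> bipartite V E \<and>
            (\<exists>xs ys. ordered_bipartition (hatV V E) (hatE E) xs ys \<and>
                     completely_graceful_mat (biadj (hatE E) xs ys) \<and>
                     dim_row (biadj (hatE E) xs ys) = k + 1))"
proof -
  note sg = assms
  have P1: "(\<exists>f. alpha_labeling V E f (int k)) \<longleftrightarrow>
            card V \<le> card E + 1 \<and> bipartite V E \<and>
            (\<exists>xs ys. ordered_bipartition (hatV V E) (hatE E) xs ys \<and>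
                     graceful_mat (biadj (hatE E) xs ys) \<and>
                     dim_row (biadj (hatE E) xs ys) = k + 1)"
  proof
    assume "\<exists>f. alpha_labeling V E f (int k)"
    then obtain f where "alpha_labeling V E f (int k)" by blast
    thus "card V \<le> card E + 1 \<and> bipartite V E \<and>
            (\<exists>xs ys. ordered_bipartition (hatV V E) (hatE E) xs ys \<and>
                     graceful_mat (biadj (hatE E) xs ys) \<and>
                     dim_row (biadj (hatE E) xs ys) = k + 1)" by (rule fwd[OF sg])
  next
    assume h: "card V \<le> card E + 1 \<and> bipartite V E \<and>
            (\<exists>xs ys. ordered_bipartition (hatV V E) (hatE E) xs ys \<and>
                     graceful_mat (biadj (hatE E) xs ys) \<and>
                     dim_row (biadj (hatE E) xs ys) = k + 1)"
    then obtain xs ys where "ordered_bipartition (hatV V E) (hatE E) xs ys"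
      "graceful_mat (biadj (hatE E) xs ys)" "dim_row (biadj (hatE E) xs ys) = k + 1" by blast
    thus "\<exists>f. alpha_labeling V E f (int k)" using bwd[OF sg] h by blast
  qed
  have C1: "(\<exists>f. complete_alpha_labeling V E f (int k)) \<longleftrightarrow>
      card V = card E + 1 \<and> (\<exists>f. alpha_labeling V E f (int k))"
    using compl_iff[OF sg] by blast
  have C2: "(\<exists>xs ys. ordered_bipartition (hatV V E) (hatE E) xs ys \<and>
                     completely_graceful_mat (biadj (hatE E) xs ys) \<and>
                     dim_row (biadj (hatE E) xs ys) = k + 1) \<longleftrightarrow>
            (\<exists>xs ys. ordered_bipartition (hatV V E) (hatE E) xs ys \<and>
                     graceful_mat (biadj (hatE E) xs ys) \<and>
                     dim_row (biadj (hatE E) xs ys) = k + 1)" if "card V \<le> card E + 1"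
  proof -
    have "completely_graceful_mat A \<Longrightarrow> graceful_mat A" for A
      unfolding completely_graceful_mat_def graceful_mat_def by simp
    thus ?thesis using hat_cg[OF sg that] by blast
  qed
  show ?thesis using P1 C1 C2 by (metis order_refl)
qed


end
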